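(* Let $\sigma:\mathbb{Z}'\to[0,1]$ with $\sum_{l\in\mathbb{Z}',\,l<0}\sigma(l)<\infty$, and let $s\in\mathbb{Z}'$ be such that $Q^0_\sigma(s):=\prod_{i=1}^{\infty}\bigl(1-\sigma(-i-s)\bigr)>0$. Then there exist $L_*=L_*(s)>0$ and $c=c(s)>0$ such that $\|\mathsf D\|\le cL$ for $0\le L<L_*$, where $\|\mathsf D\|$ is the operator norm of $\mathsf D$ (depending on $L$).
   Context: $\mathbb{Z}'=\mathbb{Z}+\tfrac12$, $\mathbb{Z}'_+=\mathbb{Z}'\cap(0,\infty)$; $\mathrm{J}_k$ is the Bessel function of the first kind. For $L\ge0$ let $K^{\mathsf{Be}}(a,a)=\sum_{l\in\mathbb{Z}'_+}\mathrm{J}_{a+l}(2L)^2$ and $M_s(a,a)=\sigma(a-s-\tfrac12)K^{\mathsf{Be}}(a,a)$. Let $\widehat{\mathbf f}(a)=\sigma(a-s-\tfrac12)\,(\mathrm{J}_{a-\frac12}(2L),\,L\mathrm{J}_{a+\frac12}(2L))^\top$ and $\widehat{\mathbf g}(a)=\frac{1}{1-M_s(a,a)}(L\mathrm{J}_{a+\frac12}(2L),\,-\mathrm{J}_{a-\frac12}(2L))^\top$. The operator $\mathsf D$ on $\ell^2(\mathbb{Z}')\otimes\mathbb{C}^2$ is $(\mathsf D\mathbf r)(a)=\sum_{b\in\mathbb{Z}'\setminus\{a\}}\frac{\mathbf r(b)\,\widehat{\mathbf g}(b)^\top\widehat{\mathbf f}(a)}{a-b}$, $a\in\mathbb{Z}'$;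 the norm on $\ell^2(\mathbb{Z}')\otimes\mathbb{C}^2$ is induced by the standard norm on $\ell^2(\mathbb{Z}')$ and the Euclidean norm on $\mathbb{C}^2$. *)

theory Defs
  imports "HOL-Analysis.Analysis"
begin

definition Zp :: "real set" where
  "Zp = {x. \<exists>k::int. x = real_of_int k + 1/2}"

definition Zp_pos :: "real set" where
  "Zp_pos = {x \<in> Zp. x > 0}"

definition besselJ_int :: "int \<Rightarrow> real \<Rightarrow> real" where
  "besselJ_int n x =
     (if n \<ge> 0 then (\<Sum>m. (-1)^m / (fact m * fact (m + nat n)) * (x/2)^(2*m + nat n))
      else (-1)^(nat (-n)) *
        (\<Sum>m. (-1)^m / (fact m * fact (m + nat (-n))) * (x/2)^(2*m + nat (-n))))"

text \<open>J_nu(x) for a real order nu; only ever applied to integer orders nu (where floor nu = nu).\<close>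
definition BesselJ :: "real \<Rightarrow> real \<Rightarrow> real" where
  "BesselJ nu x = besselJ_int \<lfloor>nu\<rfloor> x"

definition Kbe :: "real \<Rightarrow> real \<Rightarrow> real" where
  "Kbe L a = (\<Sum>\<^sub>\<infinity>l\<in>Zp_pos. (BesselJ (a + l) (2*L))^2)"

definition Ms :: "(real \<Rightarrow> real) \<Rightarrow> real \<Rightarrow> real \<Rightarrow> real \<Rightarrow> real" where
  "Ms \<sigma> s L a = \<sigma> (a - s - 1/2) * Kbe L a"

text \<open>Components of the vectors f-hat(a) and g-hat(a) in C^2 (they are real).\<close>
definition fhat1 :: "(real \<Rightarrow> real) \<Rightarrow> real \<Rightarrow> real \<Rightarrow> real \<Rightarrow> real" where
  "fhat1 \<sigma> s L a = \<sigma> (a - s - 1/2) * BesselJ (a - 1/2) (2*L)"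
definition fhat2 :: "(real \<Rightarrow> real) \<Rightarrow> real \<Rightarrow> real \<Rightarrow> real \<Rightarrow> real" where
  "fhat2 \<sigma> s L a = \<sigma> (a - s - 1/2) * (L * BesselJ (a + 1/2) (2*L))"
definition ghat1 :: "(real \<Rightarrow> real) \<Rightarrow> real \<Rightarrow> real \<Rightarrow> real \<Rightarrow> real" where
  "ghat1 \<sigma> s L b = (L * BesselJ (b + 1/2) (2*L)) / (1 - Ms \<sigma> s L b)"
definition ghat2 :: "(real \<Rightarrow> real) \<Rightarrow> real \<Rightarrow> real \<Rightarrow> real \<Rightarrow> real" where
  "ghat2 \<sigma> s L b = (- BesselJ (b - 1/2) (2*L)) / (1 - Ms \<sigma> s L b)"

definition Dker :: "(real \<Rightarrow> real) \<Rightarrow> real \<Rightarrow> real \<Rightarrow> real \<Rightarrow> real \<Rightarrow> real" where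
  "Dker \<sigma> s L a b =
     (ghat1 \<sigma> s L b * fhat1 \<sigma> s L a + ghat2 \<sigma> s L b * fhat2 \<sigma> s L a) / (a - b)"

text \<open>Elements of l^2(Z') (x) C^2 are modelled as functions r :: real => complex * complex,
  of which only the values on Z' matter; the norm on complex * complex is the Euclidean one.\<close>
definition l2Zp :: "(real \<Rightarrow> complex \<times> complex) \<Rightarrow> bool" where
  "l2Zp r \<longleftrightarrow> (\<lambda>b. (norm (r b))^2) summable_on Zp"

definition l2norm :: "(real \<Rightarrow> complex \<times> complex) \<Rightarrow> real" where
  "l2norm r = sqrt (\<Sum>\<^sub>\<infinity>b\<in>Zp. (norm (r b))^2)"

definition Dop :: "(real \<Rightarrow> real) \<Rightarrow> real \<Rightarrow> real \<Rightarrow> (real \<Rightarrow> complex \<times> complex) \<Rightarrow> real \<Rightarrow> complex \<times> complex" where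
  "Dop \<sigma> s L r a = (\<Sum>\<^sub>\<infinity>b\<in>Zp - {a}. Dker \<sigma> s L a b *\<^sub>R r b)"

end

theory Submission
  imports Defs
begin

lemma Zp_eq: "Zp = range (\<lambda>k::int. of_int k + 1/2)"
  unfolding Zp_def by auto

lemma inj_Zp: "inj_on (\<lambda>k::int. (of_int k + 1/2::real)) A"
  by (auto simp: inj_on_def)

lemma Zp_pos_eq: "Zp_pos = range (\<lambda>n::nat. real n + 1/2)"
proof -
  have "x \<in> Zp_pos \<longleftrightarrow> x \<in> range (\<lambda>n::nat. real n + 1/2)" for x
  proof
    assume "x \<in> Zp_pos"
    then obtain k :: int where k: "x = of_int k + 1/2" "x > 0" unfolding Zp_pos_def Zp_def by auto
    then have "k \<ge> 0" by linarith
    then have "x = real (nat k) + 1/2" using k by simp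
    then show "x \<in> range (\<lambda>n::nat. real n + 1/2)" by blast
  next
    assume "x \<in> range (\<lambda>n::nat. real n + 1/2)"
    then obtain n :: nat where "x = real n + 1/2" by blast
    then show "x \<in> Zp_pos" unfolding Zp_pos_def Zp_def
      by (auto intro!: exI[of _ "int n"])
  qed
  then show ?thesis by blast
qed

lemma Zp_sep: assumes "a \<in> Zp" "b \<in> Zp" "a \<noteq> b" shows "1 \<le> \<bar>a - b\<bar>"
proof -
  obtain k j :: int where "a = of_int k + 1/2" "b = of_int j + 1/2" using assms unfolding Zp_def by auto
  then have "a - b = of_int (k - j)" "k \<noteq> j" using assms(3) by auto
  moreover have "(1::int) \<le> \<bar>k - j\<bar>" using \<open>k \<noteq> j\<close> by linarith
  then have "(1::real) \<le> of_int \<bar>k - j\<bar>" by (simp only: of_int_1_le_iff)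
  ultimately show ?thesis by simp
qed

lemma int_has_sum:
  fixes f :: "int \<Rightarrow> real"
  assumes nn: "\<And>m. f m \<ge> 0"
    and s1: "(\<lambda>n. f (int n)) sums A" and s2: "(\<lambda>n. f (- int (Suc n))) sums B"
  shows "(f has_sum (A + B)) UNIV"
proof -
  have h1: "(f has_sum A) (range int)"
    using has_sum_reindex[of int UNIV f A] sums_nonneg_imp_has_sum[OF s1] nn by (simp add: o_def)
  have inj2: "inj (\<lambda>n::nat. - int (Suc n))" by (auto simp: inj_on_def)
  have h2: "(f has_sum B) (range (\<lambda>n::nat. - int (Suc n)))"
    using has_sum_reindex[OF inj2, of f B] sums_nonneg_imp_has_sum[OF s2] nn by (simp add: o_def)
  have U: "UNIV = range int \<union> range (\<lambda>n::nat. - int (Suc n))"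
  proof -
    have "m \<in> range int \<union> range (\<lambda>n::nat. - int (Suc n))" for m :: int
    proof (cases "m \<ge> 0")
      case True then show ?thesis by (metis UnI1 nonneg_int_cases rangeI)
    next
      case False then have "m = - int (Suc (nat (- m - 1)))" by simp
      then show ?thesis by blast
    qed
    then show ?thesis by blast
  qed
  have D: "range int \<inter> range (\<lambda>n::nat. - int (Suc n)) = {}" by auto
  show ?thesis using has_sum_Un_disjoint[OF h1 h2 D] U by simp
qed

lemma besselJ_bound:
  assumes L0: "0 \<le> L" and L1: "L < 1"
  shows "\<bar>besselJ_int n (2*L)\<bar> \<le> L ^ nat \<bar>n\<bar> / (1 - L^2)"
proof -
  have key: "\<bar>\<Sum>m. (-1)^m / (fact m * fact (m + p)) * (2*L/2)^(2*m + p)\<bar> \<le> L ^ p / (1 - L^2)" for p :: nat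
  proof -
    let ?t = "\<lambda>m. (-1)^m / (fact m * fact (m + p)) * (2*L/2)^(2*m + p) :: real"
    have L2: "norm (L^2) < 1" using L0 L1 by (simp add: abs_square_less_1)
    have g: "(\<lambda>m. L^p * (L^2)^m) sums (L^p * (1 / (1 - L^2)))"
      using sums_mult[OF geometric_sums[OF L2]] by simp
    have b: "norm (?t m) \<le> L^p * (L^2)^m" for m
    proof -
      have "(1::real) * 1 \<le> fact m * fact (m + p)"
        by (rule mult_mono) (auto simp: fact_ge_1)
      then have f1: "(1::real) \<le> fact m * fact (m + p)" by simp
      have "norm (?t m) = 1 / (fact m * fact (m + p)) * L^(2*m+p)"
        using L0 by (simp add: abs_mult power_abs)
      also have "\<dots> \<le> 1 * L^(2*m+p)"
        using f1 L0 by (intro mult_right_mono) (auto simp: divide_le_eq)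
      also have "\<dots> = L^p * (L^2)^m" by (metis mult_1_left power_add power_mult mult.commute)
      finally show ?thesis .
    qed
    have gs: "summable (\<lambda>m. L^p * (L^2)^m)" using g by (rule sums_summable)
    have sn: "summable (\<lambda>m. norm (?t m))"
      using summable_comparison_test'[OF gs, of 0 "\<lambda>m. norm (?t m)"] b by simp
    have "\<bar>suminf ?t\<bar> \<le> (\<Sum>m. norm (?t m))" using summable_norm[OF sn] by simp
    also have "\<dots> \<le> (\<Sum>m. L^p * (L^2)^m)" using suminf_le[OF b sn] g sums_summable by blast
    also have "\<dots> = L^p / (1 - L^2)" using sums_unique[OF g] by simp
    finally show ?thesis .
  qed
  show ?thesis
  proof (cases "n \<ge> 0")
    case True then show ?thesis using key[of "nat n"] by (simp add: besselJ_int_def)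
  next
    case False
    then have "\<bar>besselJ_int n (2*L)\<bar> = \<bar>\<Sum>m. (-1)^m / (fact m * fact (m + nat (-n))) * (2*L/2)^(2*m + nat (-n))\<bar>"
      by (simp add: besselJ_int_def abs_mult)
    also have "\<dots> \<le> L ^ nat (-n) / (1 - L^2)" by (rule key)
    finally show ?thesis using False by simp
  qed
qed


lemma pw: "((L::real) ^ n)^2 = (L^2)^n" by (simp add: power_mult[symmetric] mult.commute)

definition Tb :: "real \<Rightarrow> real" where
  "Tb L = (1 + L^2) / ((1 - L^2)^2 * (1 - L^2))"

lemma Kbe_reindex:
  "Kbe L (of_int k + 1/2) = (\<Sum>\<^sub>\<infinity>n\<in>UNIV. (besselJ_int (k + int n + 1) (2*L))^2)"
proof -
  have inj: "inj (\<lambda>n::nat. real n + 1/2)" by (auto simp: inj_on_def)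
  have e: "BesselJ (of_int k + 1/2 + (real n + 1/2)) (2*L) = besselJ_int (k + int n + 1) (2*L)" for n
  proof -
    have "of_int k + 1/2 + (real n + 1/2) = (of_int (k + int n + 1) :: real)" by simp
    then show ?thesis unfolding BesselJ_def by (simp only: floor_of_int)
  qed
  show ?thesis unfolding Kbe_def Zp_pos_eq infsum_reindex[OF inj] by (simp only: o_def e)
qed

lemma Bsum:
  assumes L0: "0 \<le> L" and L1: "L < 1"
  shows "((\<lambda>m::int. (L ^ nat \<bar>m\<bar> / (1 - L^2))^2) has_sum Tb L) UNIV"
proof -
  define c where "c = 1 / (1 - L^2)^2"
  define x where "x = L^2"
  have x1: "norm x < 1" using L0 L1 by (simp add: x_def abs_square_less_1)
  have e: "(L ^ nat \<bar>m\<bar> / (1 - L^2))^2 = c * x ^ nat \<bar>m\<bar>" for m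
    by (simp add: c_def x_def power_divide power_mult[symmetric] mult.commute)
  have s1: "(\<lambda>n. c * x ^ n) sums (c * (1 / (1 - x)))" using sums_mult[OF geometric_sums[OF x1]] .
  have s2: "(\<lambda>n. c * x ^ Suc n) sums (c * x * (1 / (1 - x)))"
    using sums_mult[OF geometric_sums[OF x1], of "c*x"] by (simp add: mult.assoc)
  have nn: "0 \<le> c * x ^ nat \<bar>m\<bar>" for m by (simp add: c_def x_def)
  have "((\<lambda>m::int. c * x ^ nat \<bar>m\<bar>) has_sum (c * (1 / (1 - x)) + c * x * (1 / (1 - x)))) UNIV"
    proof (rule int_has_sum)
    have [simp]: "nat (int n + 1) = Suc n" for n by simp
    show "(\<lambda>n. c * x ^ nat \<bar>- int (Suc n)\<bar>) sums (c * x * (1 / (1 - x)))" using s2 by simp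
  qed (use nn s1 in auto)
  moreover have "c * (1 / (1 - x)) + c * x * (1 / (1 - x)) = Tb L"
    using x1 by (simp add: Tb_def c_def x_def field_simps)
  ultimately show ?thesis by (simp add: e)
qed

lemma Kbe_nonneg: "0 \<le> Kbe L a"
  unfolding Kbe_def by (rule infsum_nonneg) simp

lemma Kbe_bound_all:
  assumes L0: "0 \<le> L" and L1: "L < 1"
  shows "Kbe L (of_int k + 1/2) \<le> Tb L"
proof -
  define B where "B = (\<lambda>m::int. (L ^ nat \<bar>m\<bar> / (1 - L^2))^2)"
  define \<phi> where "\<phi> = (\<lambda>n::nat. k + int n + 1)"
  have inj: "inj \<phi>" by (auto simp: inj_on_def \<phi>_def)
  have hB: "(B has_sum Tb L) UNIV" using Bsum[OF L0 L1] by (simp add: B_def)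
  have sB: "B summable_on UNIV" using hB by (auto simp: summable_on_def)
  have sBr: "B summable_on range \<phi>" by (rule summable_on_subset_banach[OF sB]) auto
  have sBphi: "(B \<circ> \<phi>) summable_on UNIV" using summable_on_reindex[OF inj, of B] sBr by blast
  have le: "(besselJ_int (k + int n + 1) (2*L))^2 \<le> (B \<circ> \<phi>) n" for n
  proof -
    have "\<bar>besselJ_int (\<phi> n) (2*L)\<bar> \<le> L ^ nat \<bar>\<phi> n\<bar> / (1 - L^2)" by (rule besselJ_bound[OF L0 L1])
    then have "\<bar>besselJ_int (\<phi> n) (2*L)\<bar>^2 \<le> (L ^ nat \<bar>\<phi> n\<bar> / (1 - L^2))^2"
      by (rule power_mono) simp
    then show ?thesis by (simp add: B_def \<phi>_def)
  qed
  have sJ: "(\<lambda>n. (besselJ_int (k + int n + 1) (2*L))^2) summable_on UNIV"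
    by (rule summable_on_comparison_test[OF sBphi]) (use le in auto)
  have "Kbe L (of_int k + 1/2) \<le> infsum (B \<circ> \<phi>) UNIV"
    unfolding Kbe_reindex by (rule infsum_mono[OF sJ sBphi le])
  also have "\<dots> = infsum B (range \<phi>)" using infsum_reindex[OF inj, of B] by simp
  also have "\<dots> \<le> infsum B UNIV" by (rule infsum_mono2[OF sBr sB]) (auto simp: B_def)
  also have "\<dots> = Tb L" using hB infsumI by blast
  finally show ?thesis .
qed

lemma Kbe_bound_pos:
  assumes L0: "0 \<le> L" and L1: "L < 1" and k: "k \<ge> 0"
  shows "Kbe L (of_int k + 1/2) \<le> L^2 / (1 - L^2)^3"
proof -
  define c where "c = 1 / (1 - L^2)^2"
  define x where "x = L^2"
  have x1: "norm x < 1" using L0 L1 by (simp add: x_def abs_square_less_1)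
  have s2: "(\<lambda>n. c * x ^ Suc n) sums (c * x * (1 / (1 - x)))"
    using sums_mult[OF geometric_sums[OF x1], of "c*x"] by (simp add: mult.assoc)
  have h2: "((\<lambda>n. c * x ^ Suc n) has_sum (c * x * (1 / (1 - x)))) UNIV"
    by (rule sums_nonneg_imp_has_sum[OF s2]) (simp add: c_def x_def)
  have sg: "(\<lambda>n. c * x ^ Suc n) summable_on UNIV" using h2 by (auto simp: summable_on_def)
  have le: "(besselJ_int (k + int n + 1) (2*L))^2 \<le> c * x ^ Suc n" for n
  proof -
    have "\<bar>besselJ_int (k + int n + 1) (2*L)\<bar> \<le> L ^ nat \<bar>k + int n + 1\<bar> / (1 - L^2)" by (rule besselJ_bound[OF L0 L1])
    also have "\<dots> \<le> L ^ Suc n / (1 - L^2)"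
    proof (rule divide_right_mono)
      show "L ^ nat \<bar>k + int n + 1\<bar> \<le> L ^ Suc n"
        by (rule power_decreasing) (use k L0 L1 in auto)
      show "0 \<le> 1 - L^2" using L0 L1 by (simp add: abs_square_le_1 less_imp_le)
    qed
    finally have "\<bar>besselJ_int (k + int n + 1) (2*L)\<bar>^2 \<le> (L ^ Suc n / (1 - L^2))^2"
      by (rule power_mono) simp
    moreover have "(L ^ Suc n / (1 - L^2))^2 = c * x ^ Suc n"
      unfolding c_def x_def power_divide by (simp only: pw) simp
    ultimately show ?thesis by simp
  qed
  have sJ: "(\<lambda>n. (besselJ_int (k + int n + 1) (2*L))^2) summable_on UNIV"
    by (rule summable_on_comparison_test[OF sg]) (use le in auto)
  have "Kbe L (of_int k + 1/2) \<le> infsum (\<lambda>n. c * x ^ Suc n) UNIV"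
    unfolding Kbe_reindex by (rule infsum_mono[OF sJ sg le])
  also have "\<dots> = c * x * (1 / (1 - x))" using h2 infsumI by blast
  also have "\<dots> = L^2 / (1 - L^2)^3" using x1 by (simp add: c_def x_def field_simps power3_eq_cube power2_eq_square)
  finally show ?thesis .
qed

lemma sigma_q:
  fixes \<sigma> :: "real \<Rightarrow> real" and s :: real
  assumes sigma_range: "\<forall>l\<in>Zp. 0 \<le> \<sigma> l \<and> \<sigma> l \<le> 1"
    and sigma_sum: "\<sigma> summable_on {l\<in>Zp. l < 0}"
    and s_Zp: "s \<in> Zp"
    and Q_pos: "(\<Prod>i. 1 - \<sigma> (- real (Suc i) - s)) > 0"
  shows "\<exists>q. 0 \<le> q \<and> q < 1 \<and> (\<forall>i. \<sigma> (- real (Suc i) - s) \<le> q)"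
proof -
  define f where "f i = \<sigma> (- real (Suc i) - s)" for i
  obtain t :: int where t: "s = of_int t + 1/2" using s_Zp unfolding Zp_def by auto
  have inZp: "- real (Suc i) - s \<in> Zp" for i
    unfolding Zp_def t by (rule CollectI, rule exI[of _ "- int (Suc i) - t - 1"]) simp
  have f01: "0 \<le> f i \<and> f i \<le> 1" for i using sigma_range inZp unfolding f_def by blast
  define i0 where "i0 = nat \<lceil>- s\<rceil>"
  define \<psi> where "\<psi> j = - real (Suc (j + i0)) - s" for j
  have inj: "inj \<psi>" by (auto simp: inj_on_def \<psi>_def)
  have sub: "range \<psi> \<subseteq> {l\<in>Zp. l < 0}"
  proof
    fix y assume "y \<in> range \<psi>"
    then obtain j where y: "y = \<psi> j" by blast
    have "- s \<le> real i0" unfolding i0_def by linarith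
    then have "y < 0" unfolding y \<psi>_def by simp
    moreover have "y \<in> Zp" unfolding y \<psi>_def using inZp[of "j + i0"] by simp
    ultimately show "y \<in> {l\<in>Zp. l < 0}" by simp
  qed
  have "\<sigma> summable_on range \<psi>" by (rule summable_on_subset_banach[OF sigma_sum sub])
  then have "(\<sigma> \<circ> \<psi>) summable_on UNIV" using summable_on_reindex[OF inj, of \<sigma>] by blast
  then have "(\<lambda>j. f (j + i0)) summable_on UNIV" by (simp add: o_def \<psi>_def f_def)
  moreover have nn: "\<And>j. 0 \<le> f (j + i0)" using f01 by simp
  ultimately have "summable (\<lambda>j. f (j + i0))" using summable_on_UNIV_nonneg_real_iff[of "\<lambda>j. f (j + i0)"] by simp

  then have sf: "summable f" by simp
  have "summable (\<lambda>i. norm ((1 - f i) - 1))" using sf f01 by simp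
  then have "abs_convergent_prod (\<lambda>i. 1 - f i)" by (rule summable_imp_abs_convergent_prod)
  then have cp: "convergent_prod (\<lambda>i. 1 - f i)" by (rule abs_convergent_prod_imp_convergent_prod)
  have lt1: "f i < 1" for i
  proof (rule ccontr)
    assume "\<not> f i < 1"
    then have "1 - f i = 0" using f01[of i] by simp
    then have "prodinf (\<lambda>i. 1 - f i) = 0"
      using has_prod_zeroI[of "\<lambda>i. 1 - f i"] cp convergent_prod_has_prod by blast
    then show False using Q_pos unfolding f_def by simp
  qed
  have "f \<longlonglongrightarrow> 0" using sf by (rule summable_LIMSEQ_zero)
  then have "eventually (\<lambda>i. f i < 1/2) sequentially" by (rule order_tendstoD) simp
  then obtain N where N: "\<And>i. i \<ge> N \<Longrightarrow> f i < 1/2" by (auto simp: eventually_sequentially)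
  define q where "q = max (1/2) (Max (f ` {..N}))"
  have "Max (f ` {..N}) < 1" using lt1 by (subst Max_less_iff) auto
  then have q1: "q < 1" unfolding q_def by simp
  have "f i \<le> q" for i
  proof (cases "i \<le> N")
    case True
    have "f i \<le> Max (f ` {..N})" by (rule Max_ge) (use True in auto)
    then show ?thesis unfolding q_def by (simp add: le_max_iff_disj)
  next
    case False then show ?thesis using N[of i] unfolding q_def by auto
  qed
  then show ?thesis using q1 by (intro exI[of _ q]) (auto simp: q_def f_def)
qed


lemma op_bound:
  fixes k :: "real \<Rightarrow> real \<Rightarrow> real" and h :: "real \<Rightarrow> real" and \<Lambda> :: real
    and r :: "real \<Rightarrow> complex \<times> complex"
  assumes h0: "\<And>b. 0 \<le> h b" and hs: "(\<lambda>b. (h b)^2) summable_on Zp" and \<Lambda>0: "0 \<le> \<Lambda>"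
    and kb: "\<And>a b. a \<in> Zp \<Longrightarrow> b \<in> Zp \<Longrightarrow> a \<noteq> b \<Longrightarrow> \<bar>k a b\<bar> \<le> \<Lambda> * h a * h b"
    and r: "l2Zp r"
  shows "(\<forall>a\<in>Zp. (\<lambda>b. k a b *\<^sub>R r b) summable_on (Zp - {a}))
     \<and> l2Zp (\<lambda>a. \<Sum>\<^sub>\<infinity>b\<in>Zp - {a}. k a b *\<^sub>R r b)
     \<and> l2norm (\<lambda>a. \<Sum>\<^sub>\<infinity>b\<in>Zp - {a}. k a b *\<^sub>R r b) \<le> \<Lambda> * (infsum (\<lambda>b. (h b)^2) Zp + 1)^2 * l2norm r"
proof -
  define \<rho> where "\<rho> b = norm (r b)" for b
  define R where "R = infsum (\<lambda>b. (\<rho> b)^2) Zp"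
  define H where "H = infsum (\<lambda>b. (h b)^2) Zp"
  define D where "D a = (\<Sum>\<^sub>\<infinity>b\<in>Zp - {a}. k a b *\<^sub>R r b)" for a
  have \<rho>0: "0 \<le> \<rho> b" for b by (simp add: \<rho>_def)
  have rs: "(\<lambda>b. (\<rho> b)^2) summable_on Zp" using r by (simp add: l2Zp_def \<rho>_def)
  have R0: "0 \<le> R" unfolding R_def by (rule infsum_nonneg) simp
  have H0: "0 \<le> H" unfolding H_def by (rule infsum_nonneg) simp
  have hrs: "(\<lambda>b. h b * \<rho> b) summable_on Zp"
  proof (rule summable_on_comparison_test[OF summable_on_add[OF hs rs]])
    fix b
    have "2 * (h b * \<rho> b) \<le> (h b)^2 + (\<rho> b)^2" using sum_squares_bound[of "h b" "\<rho> b"] by simp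
    moreover have "0 \<le> h b * \<rho> b" using h0 \<rho>0 by simp
    ultimately show "h b * \<rho> b \<le> (h b)^2 + (\<rho> b)^2" by linarith
    show "0 \<le> h b * \<rho> b" using h0 \<rho>0 by simp
  qed
  define S where "S = infsum (\<lambda>b. h b * \<rho> b) Zp"
  have S0: "0 \<le> S" unfolding S_def by (rule infsum_nonneg) (simp add: h0 \<rho>0)
  have St: "S \<le> (t * H + R / t) / 2" if t: "t > 0" for t
  proof -
    have pt: "h b * \<rho> b \<le> (t/2) * (h b)^2 + (1/(2*t)) * (\<rho> b)^2" for b
    proof -
      have "0 \<le> (t * h b - \<rho> b)^2 / t" using t by simp
      also have "(t * h b - \<rho> b)^2 / t = t * (h b)^2 - 2 * (h b * \<rho> b) + (\<rho> b)^2 / t"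
        using t by (simp add: power2_eq_square field_simps)
      finally show ?thesis using t by (simp add: field_simps)
    qed
    have s1: "(\<lambda>b. (t/2) * (h b)^2) summable_on Zp" by (rule summable_on_cmult_right[OF hs])
    have s2: "(\<lambda>b. (1/(2*t)) * (\<rho> b)^2) summable_on Zp" by (rule summable_on_cmult_right[OF rs])
    have "S \<le> infsum (\<lambda>b. (t/2) * (h b)^2 + (1/(2*t)) * (\<rho> b)^2) Zp"
      unfolding S_def by (rule infsum_mono[OF hrs summable_on_add[OF s1 s2] pt])
    also have "\<dots> = (t/2) * H + (1/(2*t)) * R"
      unfolding infsum_add[OF s1 s2] H_def R_def
      by (simp only: infsum_cmult_right[OF hs] infsum_cmult_right[OF rs])
    finally show ?thesis by (simp add: field_simps)
  qed
  have SR: "S \<le> sqrt R * (H + 1) / 2"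
  proof (cases "R > 0")
    case True
    have "S \<le> (sqrt R * H + R / sqrt R) / 2" using St[of "sqrt R"] True by simp
    also have "R / sqrt R = sqrt R" using True by (metis real_div_sqrt less_imp_le)
    finally show ?thesis by (simp add: field_simps)
  next
    case False
    then have R00: "R = 0" using R0 by simp
    have "S \<le> 0"
    proof (rule ccontr)
      assume "\<not> S \<le> 0"
      then have Sp: "S > 0" by simp
      define t where "t = S / (H + 1)"
      have tp: "t > 0" using Sp H0 by (simp add: t_def)
      have "S \<le> t * H / 2" using St[OF tp] R00 by simp
      also have "t * H / 2 < S" using Sp H0 by (simp add: t_def field_simps) (metis add_nonneg_pos mult_nonneg_nonneg less_imp_le mult_pos_pos zero_less_numeral)
      finally show False by simp
    qed
    then show ?thesis using R00 by simp
  qed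
  have nb: "norm (k a b *\<^sub>R r b) \<le> \<Lambda> * h a * (h b * \<rho> b)" if "a \<in> Zp" "b \<in> Zp - {a}" for a b
  proof -
    have "norm (k a b *\<^sub>R r b) = \<bar>k a b\<bar> * \<rho> b" by (simp add: \<rho>_def)
    also have "\<dots> \<le> (\<Lambda> * h a * h b) * \<rho> b"
      by (rule mult_right_mono[OF kb \<rho>0]) (use that in auto)
    finally show ?thesis by (simp add: mult.assoc)
  qed
  have Gs: "(\<lambda>b. \<Lambda> * h a * (h b * \<rho> b)) summable_on (Zp - {a})" for a
    by (rule summable_on_cmult_right, rule summable_on_subset_banach[OF hrs]) auto
  have ns: "(\<lambda>b. norm (k a b *\<^sub>R r b)) summable_on (Zp - {a})" if "a \<in> Zp" for a
    by (rule summable_on_comparison_test[OF Gs]) (use nb that in auto)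
  have P1: "\<forall>a\<in>Zp. (\<lambda>b. k a b *\<^sub>R r b) summable_on (Zp - {a})"
  proof
    fix a assume a: "a \<in> Zp"
    show "(\<lambda>b. k a b *\<^sub>R r b) summable_on (Zp - {a})"
      by (rule abs_summable_summable) (use ns[OF a] in simp)
  qed
  have Db: "norm (D a) \<le> \<Lambda> * S * h a" if a: "a \<in> Zp" for a
  proof -
    have "norm (D a) \<le> infsum (\<lambda>b. norm (k a b *\<^sub>R r b)) (Zp - {a})"
      unfolding D_def by (rule norm_infsum_bound) (use ns[OF a] in simp)
    also have "\<dots> \<le> infsum (\<lambda>b. \<Lambda> * h a * (h b * \<rho> b)) (Zp - {a})"
      by (rule infsum_mono[OF ns[OF a] Gs]) (use nb a in auto)
    also have "\<dots> = \<Lambda> * h a * infsum (\<lambda>b. h b * \<rho> b) (Zp - {a})"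
      by (rule infsum_cmult_right, rule summable_on_subset_banach[OF hrs]) auto
    also have "\<dots> \<le> \<Lambda> * h a * S"
      unfolding S_def
      by (rule mult_left_mono, rule infsum_mono2[OF summable_on_subset_banach[OF hrs] hrs])
         (use h0 \<rho>0 \<Lambda>0 in auto)
    finally show ?thesis by (simp add: mult_ac)
  qed
  have D2: "(norm (D a))^2 \<le> (\<Lambda> * S)^2 * (h a)^2" if a: "a \<in> Zp" for a
  proof -
    have "(norm (D a))^2 \<le> (\<Lambda> * S * h a)^2" by (rule power_mono[OF Db[OF a]]) simp
    then show ?thesis by (simp add: power_mult_distrib)
  qed
  have cs: "(\<lambda>a. (\<Lambda> * S)^2 * (h a)^2) summable_on Zp" by (rule summable_on_cmult_right[OF hs])
  have ds: "(\<lambda>a. (norm (D a))^2) summable_on Zp"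
    by (rule summable_on_comparison_test[OF cs]) (use D2 in auto)
  have "infsum (\<lambda>a. (norm (D a))^2) Zp \<le> infsum (\<lambda>a. (\<Lambda> * S)^2 * (h a)^2) Zp"
    by (rule infsum_mono[OF ds cs D2])
  also have "\<dots> = (\<Lambda> * S)^2 * H" unfolding H_def by (rule infsum_cmult_right[OF hs])
  finally have I: "infsum (\<lambda>a. (norm (D a))^2) Zp \<le> (\<Lambda> * S)^2 * H" .
  have "l2norm D \<le> sqrt ((\<Lambda> * S)^2 * H)" unfolding l2norm_def by (rule real_sqrt_le_mono[OF I])
  also have "\<dots> = \<Lambda> * S * sqrt H" using \<Lambda>0 S0 by (simp add: real_sqrt_mult)
  also have "\<dots> \<le> \<Lambda> * (sqrt R * (H + 1) / 2) * (H + 1)"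
  proof (rule mult_mono)
    show "\<Lambda> * S \<le> \<Lambda> * (sqrt R * (H + 1) / 2)" by (rule mult_left_mono[OF SR \<Lambda>0])
    show "sqrt H \<le> H + 1"
    proof (cases "H \<le> 1")
      case True then have "sqrt H \<le> 1" by simp
      then show ?thesis using H0 by linarith
    next
      case False then have "1 \<le> sqrt H" by simp
      then have "sqrt H * 1 \<le> sqrt H * sqrt H" by (intro mult_left_mono) auto
      then have "sqrt H \<le> H" using H0 by simp
      then show ?thesis by simp
    qed
    show "0 \<le> \<Lambda> * (sqrt R * (H + 1) / 2)" using \<Lambda>0 R0 H0 by simp
    show "0 \<le> sqrt H" using H0 by simp
  qed
  also have "\<dots> = (\<Lambda> * (H + 1)^2 * sqrt R) / 2" by (simp add: power2_eq_square)
  also have "\<dots> \<le> \<Lambda> * (H + 1)^2 * sqrt R"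
    using \<Lambda>0 R0 H0 by simp
  finally have P3: "l2norm D \<le> \<Lambda> * (H + 1)^2 * l2norm r"
    by (simp add: l2norm_def R_def \<rho>_def)
  have P2: "l2Zp D" unfolding l2Zp_def by (rule ds)
  show ?thesis unfolding D_def[symmetric] H_def[symmetric] using P1 P2 P3 by (intro conjI)
qed


definition hh :: "real \<Rightarrow> real" where "hh b = (1/2) ^ nat \<lfloor>\<bar>b\<bar>\<rfloor>"

lemma hh_nonneg: "0 \<le> hh b" by (simp add: hh_def)

lemma hh_summable: "(\<lambda>b. (hh b)^2) summable_on Zp"
proof -
  define f where "f k = (hh (of_int k + 1/2))^2" for k :: int
  have fl1: "\<lfloor>\<bar>real n + 1/2\<bar>\<rfloor> = int n" for n :: nat by (simp add: floor_eq_iff)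
  have fl2: "\<lfloor>\<bar>- real (Suc n) + 1/2\<bar>\<rfloor> = int n" for n :: nat by (simp add: floor_eq_iff)
  have q: "norm (1/4::real) < 1" by simp
  have e1: "f (int n) = (1/4)^n" for n
    unfolding f_def hh_def using fl1[of n] by (simp add: pw) (simp add: power2_eq_square)
  have e2: "f (- int (Suc n)) = (1/4)^n" for n
  proof -
    have "(of_int (- int (Suc n)) + 1/2 :: real) = - real (Suc n) + 1/2" by simp
    then show ?thesis unfolding f_def hh_def using fl2[of n] by (simp only: pw) (simp add: power2_eq_square)
  qed
  have "(f has_sum (1 / (1 - 1/4) + 1 / (1 - 1/4))) UNIV"
    by (rule int_has_sum) (use geometric_sums[OF q] e1 e2 in \<open>auto simp: f_def\<close>)
  then have "f summable_on UNIV" by (auto simp: summable_on_def)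
  then have "(\<lambda>k. (hh (of_int k + 1/2))^2) summable_on UNIV" by (simp add: f_def[abs_def])
  then show ?thesis unfolding Zp_eq using summable_on_reindex[OF inj_Zp, of "\<lambda>b. (hh b)^2" UNIV]
    by (simp add: o_def f_def)
qed

lemma J_hh:
  assumes L0: "0 \<le> L" and L1: "L \<le> 1/2" and b: "b \<in> Zp"
  shows "\<bar>BesselJ (b - 1/2) (2*L)\<bar> \<le> 4/3 * hh b" "\<bar>BesselJ (b + 1/2) (2*L)\<bar> \<le> 4/3 * hh b"
proof -
  obtain k :: int where k: "b = of_int k + 1/2" using b unfolding Zp_def by auto
  have gen: "\<bar>besselJ_int m (2*L)\<bar> \<le> 4/3 * hh b" if m: "\<bar>b\<bar> < of_int \<bar>m\<bar> + 1" for m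
  proof -
    have "\<bar>besselJ_int m (2*L)\<bar> \<le> L ^ nat \<bar>m\<bar> / (1 - L^2)" by (rule besselJ_bound) (use L0 L1 in auto)
    also have "\<dots> \<le> (1/2) ^ nat \<bar>m\<bar> / (3/4)"
    proof (rule frac_le)
      show "L ^ nat \<bar>m\<bar> \<le> (1/2) ^ nat \<bar>m\<bar>" by (rule power_mono) (use L0 L1 in auto)
      have "L^2 \<le> (1/2)^2" by (rule power_mono) (use L0 L1 in auto)
      then show "3/4 \<le> 1 - L^2" by (simp add: power2_eq_square)
    qed auto
    also have "\<dots> \<le> (1/2) ^ nat \<lfloor>\<bar>b\<bar>\<rfloor> / (3/4)"
    proof (rule divide_right_mono)
      have "\<lfloor>\<bar>b\<bar>\<rfloor> \<le> \<bar>m\<bar>" using m by (simp add: floor_le_iff)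
      then have "nat \<lfloor>\<bar>b\<bar>\<rfloor> \<le> nat \<bar>m\<bar>" by simp
      then show "(1/2::real) ^ nat \<bar>m\<bar> \<le> (1/2) ^ nat \<lfloor>\<bar>b\<bar>\<rfloor>" by (rule power_decreasing) auto
    qed simp
    finally show ?thesis by (simp add: hh_def)
  qed
  have "BesselJ (b - 1/2) (2*L) = besselJ_int k (2*L)" unfolding BesselJ_def k by simp
  moreover have "\<bar>b\<bar> < of_int \<bar>k\<bar> + 1" unfolding k by linarith
  ultimately show "\<bar>BesselJ (b - 1/2) (2*L)\<bar> \<le> 4/3 * hh b" using gen by simp
  have "b + 1/2 = of_int (k + 1)" unfolding k by simp
  then have "BesselJ (b + 1/2) (2*L) = besselJ_int (k + 1) (2*L)" unfolding BesselJ_def by (simp only: floor_of_int)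
  moreover have "\<bar>b\<bar> < of_int \<bar>k + 1\<bar> + 1" unfolding k by linarith
  ultimately show "\<bar>BesselJ (b + 1/2) (2*L)\<bar> \<le> 4/3 * hh b" using gen by simp
qed


lemma Zp_shift: assumes "a \<in> Zp" "s \<in> Zp" shows "a - s - 1/2 \<in> Zp"
proof -
  obtain k j :: int where "a = of_int k + 1/2" "s = of_int j + 1/2" using assms unfolding Zp_def by auto
  then have "a - s - 1/2 = of_int (k - j - 1) + 1/2" by simp
  then show ?thesis unfolding Zp_def by blast
qed

lemma kernel_bound:
  assumes sr: "\<forall>l\<in>Zp. 0 \<le> \<sigma> l \<and> \<sigma> l \<le> 1" and s: "s \<in> Zp"
    and L0: "0 \<le> L" and L1: "L \<le> 1/2" and \<delta>: "\<delta> > 0"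
    and M: "\<And>b. b \<in> Zp \<Longrightarrow> Ms \<sigma> s L b \<le> 1 - \<delta>"
    and a: "a \<in> Zp" and b: "b \<in> Zp" and ab: "a \<noteq> b"
  shows "\<bar>Dker \<sigma> s L a b\<bar> \<le> (4*L/\<delta>) * hh a * hh b"
proof -
  define m where "m = 1 - Ms \<sigma> s L b"
  have m: "\<delta> \<le> m" using M[OF b] by (simp add: m_def)
  have mp: "0 < m" using m \<delta> by simp
  have sa: "0 \<le> \<sigma> (a - s - 1/2)" "\<sigma> (a - s - 1/2) \<le> 1" using sr Zp_shift[OF a s] by auto
  note Ja = J_hh[OF L0 L1 a] and Jb = J_hh[OF L0 L1 b]
  have ha: "0 \<le> hh a" and hb: "0 \<le> hh b" by (simp_all add: hh_nonneg)
  have g1: "\<bar>ghat1 \<sigma> s L b\<bar> \<le> L * (4/3 * hh b) / \<delta>"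
  proof -
    have "\<bar>ghat1 \<sigma> s L b\<bar> = L * \<bar>BesselJ (b + 1/2) (2*L)\<bar> / m"
      unfolding ghat1_def m_def[symmetric] using L0 mp by (simp add: abs_mult)
    also have "\<dots> \<le> L * (4/3 * hh b) / m"
      by (rule divide_right_mono, rule mult_left_mono) (use Jb L0 mp in auto)
    also have "\<dots> \<le> L * (4/3 * hh b) / \<delta>"
      by (rule divide_left_mono) (use m \<delta> L0 hb mp in auto)
    finally show ?thesis .
  qed
  have g2: "\<bar>ghat2 \<sigma> s L b\<bar> \<le> (4/3 * hh b) / \<delta>"
  proof -
    have "\<bar>ghat2 \<sigma> s L b\<bar> = \<bar>BesselJ (b - 1/2) (2*L)\<bar> / m"
      unfolding ghat2_def m_def[symmetric] using mp by simp
    also have "\<dots> \<le> (4/3 * hh b) / m"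
      by (rule divide_right_mono) (use Jb mp in auto)
    also have "\<dots> \<le> (4/3 * hh b) / \<delta>"
      by (rule divide_left_mono) (use m \<delta> hb mp in auto)
    finally show ?thesis .
  qed
  have f1: "\<bar>fhat1 \<sigma> s L a\<bar> \<le> 4/3 * hh a"
  proof -
    have "\<bar>fhat1 \<sigma> s L a\<bar> = \<sigma> (a - s - 1/2) * \<bar>BesselJ (a - 1/2) (2*L)\<bar>"
      unfolding fhat1_def using sa by (simp add: abs_mult)
    also have "\<dots> \<le> 1 * \<bar>BesselJ (a - 1/2) (2*L)\<bar>" by (rule mult_right_mono) (use sa in auto)
    finally show ?thesis using Ja by simp
  qed
  have f2: "\<bar>fhat2 \<sigma> s L a\<bar> \<le> L * (4/3 * hh a)"
  proof -
    have "\<bar>fhat2 \<sigma> s L a\<bar> = \<sigma> (a - s - 1/2) * (L * \<bar>BesselJ (a + 1/2) (2*L)\<bar>)"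
      unfolding fhat2_def using sa L0 by (simp add: abs_mult)
    also have "\<dots> \<le> 1 * (L * \<bar>BesselJ (a + 1/2) (2*L)\<bar>)" by (rule mult_right_mono) (use sa L0 in auto)
    also have "\<dots> \<le> L * (4/3 * hh a)" using mult_left_mono[OF Ja(2) L0] by simp
    finally show ?thesis .
  qed
  have p1: "\<bar>ghat1 \<sigma> s L b * fhat1 \<sigma> s L a\<bar> \<le> (L * (4/3 * hh b) / \<delta>) * (4/3 * hh a)"
    unfolding abs_mult by (rule mult_mono[OF g1 f1]) (use L0 hb \<delta> in auto)
  have p2: "\<bar>ghat2 \<sigma> s L b * fhat2 \<sigma> s L a\<bar> \<le> ((4/3 * hh b) / \<delta>) * (L * (4/3 * hh a))"
    unfolding abs_mult by (rule mult_mono[OF g2 f2]) (use L0 hb \<delta> in auto)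
  have num: "\<bar>ghat1 \<sigma> s L b * fhat1 \<sigma> s L a + ghat2 \<sigma> s L b * fhat2 \<sigma> s L a\<bar> \<le> (32/9) * (L/\<delta>) * hh a * hh b"
  proof -
    have "\<bar>ghat1 \<sigma> s L b * fhat1 \<sigma> s L a + ghat2 \<sigma> s L b * fhat2 \<sigma> s L a\<bar>
        \<le> (L * (4/3 * hh b) / \<delta>) * (4/3 * hh a) + ((4/3 * hh b) / \<delta>) * (L * (4/3 * hh a))"
      using p1 p2 abs_triangle_ineq[of "ghat1 \<sigma> s L b * fhat1 \<sigma> s L a" "ghat2 \<sigma> s L b * fhat2 \<sigma> s L a"] by linarith
    also have "\<dots> = (32/9) * (L/\<delta>) * hh a * hh b" by (simp add: field_simps)
    finally show ?thesis .
  qed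
  have sep: "1 \<le> \<bar>a - b\<bar>" by (rule Zp_sep[OF a b ab])
  have "\<bar>Dker \<sigma> s L a b\<bar> = \<bar>ghat1 \<sigma> s L b * fhat1 \<sigma> s L a + ghat2 \<sigma> s L b * fhat2 \<sigma> s L a\<bar> / \<bar>a - b\<bar>"
    unfolding Dker_def by simp
  also have "\<dots> \<le> \<bar>ghat1 \<sigma> s L b * fhat1 \<sigma> s L a + ghat2 \<sigma> s L b * fhat2 \<sigma> s L a\<bar>"
    using sep by (simp add: divide_le_eq mult_le_cancel_left1 order_trans[OF _ mult_right_mono])
  also have "\<dots> \<le> (32/9) * (L/\<delta>) * hh a * hh b" by (rule num)
  also have "\<dots> \<le> (4*L/\<delta>) * hh a * hh b"
  proof -
    have "0 \<le> (L/\<delta>) * hh a * hh b" using L0 \<delta> ha hb by simp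
    then show ?thesis by (simp add: mult_ac)
  qed
  finally show ?thesis .
qed


theorem proposition5p1:
  fixes \<sigma> :: "real \<Rightarrow> real" and s :: real
  assumes sigma_range: "\<forall>l\<in>Zp. 0 \<le> \<sigma> l \<and> \<sigma> l \<le> 1"
    and sigma_sum: "\<sigma> summable_on {l\<in>Zp. l < 0}"
    and s_Zp: "s \<in> Zp"
    and Q_pos: "(\<Prod>i. 1 - \<sigma> (- real (Suc i) - s)) > 0"
  shows "\<exists>Lstar > 0. \<exists>c > 0. \<forall>L. 0 \<le> L \<and> L < Lstar \<longrightarrow>
           (\<forall>r. l2Zp r \<longrightarrow>
              (\<forall>a\<in>Zp. (\<lambda>b. Dker \<sigma> s L a b *\<^sub>R r b) summable_on (Zp - {a}))
              \<and> l2Zp (Dop \<sigma> s L r)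
              \<and> l2norm (Dop \<sigma> s L r) \<le> c * L * l2norm r)"
proof -
  obtain q where q0: "0 \<le> q" and q1: "q < 1" and qb: "\<And>i. \<sigma> (- real (Suc i) - s) \<le> q"
    using sigma_q[OF sigma_range sigma_sum s_Zp Q_pos] by blast
  define \<delta> where "\<delta> = (1 - q) / 2"
  have \<delta>0: "\<delta> > 0" using q1 by (simp add: \<delta>_def)
  define P where "P L \<longleftrightarrow> L < 1/2 \<and> L^2 / (1 - L^2)^3 < 1/2 \<and> q * Tb L < (1 + q)/2" for L :: real
  have t1: "((\<lambda>L::real. L) \<longlongrightarrow> 0) (at_right 0)" by (rule tendsto_ident_at)
  have t2: "((\<lambda>L::real. L^2 / (1 - L^2)^3) \<longlongrightarrow> 0^2 / (1 - 0^2)^3) (at_right 0)"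
    by (intro tendsto_intros) auto
  have t3: "((\<lambda>L::real. q * Tb L) \<longlongrightarrow> q * ((1 + 0^2) / ((1 - 0^2)^2 * (1 - 0^2)))) (at_right 0)"
    unfolding Tb_def by (intro tendsto_intros) auto
  have e1: "eventually (\<lambda>L::real. L < 1/2) (at_right 0)" by (rule order_tendstoD(2)[OF t1]) simp
  have e2: "eventually (\<lambda>L::real. L^2 / (1 - L^2)^3 < 1/2) (at_right 0)" by (rule order_tendstoD(2)[OF t2]) simp
  have e3: "eventually (\<lambda>L::real. q * Tb L < (1 + q)/2) (at_right 0)" by (rule order_tendstoD(2)[OF t3]) (use q1 in simp)
  have "eventually P (at_right 0)" unfolding P_def using eventually_conj[OF e1 eventually_conj[OF e2 e3]] by simp
  then obtain Lstar :: real where Ls: "Lstar > 0" and LsP: "\<And>L. L > 0 \<Longrightarrow> L < Lstar \<Longrightarrow> P L"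
    unfolding eventually_at_right_field by auto
  have P0: "P 0" unfolding P_def Tb_def using q1 by simp
  have PL: "P L" if "0 \<le> L" "L < Lstar" for L
    using that P0 LsP by (cases "L = 0") auto
  define H where "H = infsum (\<lambda>b. (hh b)^2) Zp"
  have H0: "0 \<le> H" unfolding H_def by (rule infsum_nonneg) simp
  define c where "c = 4 * (H + 1)^2 / \<delta>"
  have c0: "c > 0" unfolding c_def using \<delta>0 H0 by simp
  have main: "(\<forall>a\<in>Zp. (\<lambda>b. Dker \<sigma> s L a b *\<^sub>R r b) summable_on (Zp - {a}))
              \<and> l2Zp (Dop \<sigma> s L r)
              \<and> l2norm (Dop \<sigma> s L r) \<le> c * L * l2norm r"
    if L: "0 \<le> L \<and> L < Lstar" and r: "l2Zp r" for L r
  proof -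
    have PL': "L < 1/2" "L^2 / (1 - L^2)^3 < 1/2" "q * Tb L < (1 + q)/2" using PL[of L] L unfolding P_def by auto
    have L0: "0 \<le> L" and L1: "L < 1" using L PL' by auto
    have Mb: "Ms \<sigma> s L b \<le> 1 - \<delta>" if b: "b \<in> Zp" for b
    proof -
      obtain k :: int where k: "b = of_int k + 1/2" using b unfolding Zp_def by auto
      have sb: "0 \<le> \<sigma> (b - s - 1/2)" "\<sigma> (b - s - 1/2) \<le> 1" using sigma_range Zp_shift[OF b s_Zp] by auto
      have K0: "0 \<le> Kbe L b" by (rule Kbe_nonneg)
      show ?thesis
      proof (cases "k \<ge> 0")
        case True
        have "Ms \<sigma> s L b \<le> 1 * Kbe L b" unfolding Ms_def by (rule mult_right_mono) (use sb K0 in auto)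
        also have "\<dots> \<le> L^2 / (1 - L^2)^3" unfolding k using Kbe_bound_pos[OF L0 L1 True] by simp
        finally have "Ms \<sigma> s L b \<le> L^2 / (1 - L^2)^3" .
        moreover have "1/2 \<le> 1 - \<delta>" using q0 by (simp add: \<delta>_def)
        ultimately show ?thesis using PL'(2) by linarith
      next
        case False
        have "b - s - 1/2 = - real (Suc (nat (- k - 1))) - s" using False unfolding k by simp
        then have sq: "\<sigma> (b - s - 1/2) \<le> q" using qb[of "nat (- k - 1)"] by metis
        have "Ms \<sigma> s L b \<le> q * Tb L" unfolding Ms_def
          by (rule mult_mono[OF sq]) (use Kbe_bound_all[OF L0 L1, of k] k q0 K0 in auto)
        moreover have "(1 + q)/2 = 1 - \<delta>" by (simp add: \<delta>_def field_simps)
        ultimately show ?thesis using PL'(3) by linarith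
      qed
    qed
    have kb: "\<bar>Dker \<sigma> s L a b\<bar> \<le> (4*L/\<delta>) * hh a * hh b" if "a \<in> Zp" "b \<in> Zp" "a \<noteq> b" for a b
      by (rule kernel_bound[OF sigma_range s_Zp L0 _ \<delta>0 Mb that]) (use PL' in auto)
    have OB: "(\<forall>a\<in>Zp. (\<lambda>b. Dker \<sigma> s L a b *\<^sub>R r b) summable_on (Zp - {a}))
     \<and> l2Zp (\<lambda>a. \<Sum>\<^sub>\<infinity>b\<in>Zp - {a}. Dker \<sigma> s L a b *\<^sub>R r b)
     \<and> l2norm (\<lambda>a. \<Sum>\<^sub>\<infinity>b\<in>Zp - {a}. Dker \<sigma> s L a b *\<^sub>R r b) \<le> (4*L/\<delta>) * (infsum (\<lambda>b. (hh b)^2) Zp + 1)^2 * l2norm r"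
      by (rule op_bound[OF hh_nonneg hh_summable _ kb r]) (use L0 \<delta>0 in auto)
    have eqD: "Dop \<sigma> s L r = (\<lambda>a. \<Sum>\<^sub>\<infinity>b\<in>Zp - {a}. Dker \<sigma> s L a b *\<^sub>R r b)"
      by (simp add: Dop_def[abs_def])
    have ceq: "(4*L/\<delta>) * (H + 1)^2 * l2norm r = c * L * l2norm r" by (simp add: c_def)
    have A: "\<forall>a\<in>Zp. (\<lambda>b. Dker \<sigma> s L a b *\<^sub>R r b) summable_on (Zp - {a})"
      using OB by blast
    have B: "l2Zp (Dop \<sigma> s L r)" using OB unfolding eqD by blast
    have C: "l2norm (Dop \<sigma> s L r) \<le> c * L * l2norm r"
      using OB ceq unfolding eqD H_def by linarith
    show ?thesis using A B C by blast
  qed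
  show ?thesis
    by (rule exI[of _ Lstar], rule conjI[OF Ls], rule exI[of _ c], rule conjI[OF c0]) (use main in blast)
qed

end
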